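(* Let $n\ge2$, let $\mathcal{G}$ be one of $F_n$, $T_n$, $V_n$, and let $g\in\mathcal{G}$ be represented by the tree pair $(\mathrm{G}_{+},\sigma,\mathrm{G}_{-})$. Let $\ell_u(\mathrm{G}_{+})\mapsto\ell_v(\mathrm{G}_{-})$ be a branch of $g$, let $h\in F_n$ and let $h'=(h)_{[v]}$. Then $\mathcal{N}(gh')=\mathcal{N}(g)+\mathcal{N}(h)-1$.
   Context: $F_n,T_n,V_n$ are the Brown–Thompson groups of piecewise-linear maps of $[0,1]$ (resp. the circle, resp. right-continuous bijections of $[0,1]$) with finitely many $n$-adic breakpoints and slopes powers of $n$; elements are represented by pairs $(\mathrm{T}_+,\sigma,\mathrm{T}_-)$ of rooted finite $n$-ary trees with the same number of leaves and a bijection $\sigma$ between their leaves, and each element has a unique reduced such representative. $\mathcal{N}(g)$ is the number of leaves of each tree in the reduced tree pair of $g$. Nodes of the infinite rooted $n$-ary tree are identified with words over $\{0,\dots,n-1\}$ (the path from the root); a leaf of a finite tree corresponds to such a word, and the path from the root to leaf $\omega$ is denoted $\ell_\omega(\mathrm{T})$. A branch of $g$ is a correspondence $\ell_{\omega}(\mathrm{T}_+)\mapsto\ell_{\sigma(\omega)}(\mathrm{T}_-)$ between a leaf of the source tree and the leaf of the target tree it is mapped to. For $h\in F_n$ with tree pair $(\mathrm{H}_+,\mathrm{id},\mathrm{H}_-)$ and a word $v$, $(h)_{[v]}$ denotes the element whose tree pair is obtained from a tree pair $(\mathrm{T},\mathrm{id},\mathrm{T})$ having $v$ as a leaf by attaching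 $\mathrm{H}_+$ to the leaf $v$ of the source tree and $\mathrm{H}_-$ to the leaf $v$ of the target tree (so it acts as $h$ on the subinterval corresponding to $v$ and as the identity elsewhere). *)

theory Defs
  imports Complex_Main
begin

text \<open>Words over {0..n-1} are nat lists. The n-adic interval of a word w is
  [wleft n w, wleft n w + wlen n w).\<close>

definition wleft :: "nat \<Rightarrow> nat list \<Rightarrow> real" where
  "wleft n w = (\<Sum>i<length w. real (w ! i) / real n ^ (i + 1))"

definition wlen :: "nat \<Rightarrow> nat list \<Rightarrow> real" where
  "wlen n w = 1 / real n ^ length w"

definition in_word :: "nat \<Rightarrow> nat list \<Rightarrow> real \<Rightarrow> bool" where
  "in_word n w x \<longleftrightarrow> wleft n w \<le> x \<and> x < wleft n w + wlen n w"

text \<open>Finite rooted n-ary trees, represented by their sets of leaves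
  (each leaf identified with the word of its path from the root).\<close>

inductive_set ntree :: "nat \<Rightarrow> nat list set set" for n :: nat where
  root: "{[]} \<in> ntree n"
| expand: "L \<in> ntree n \<Longrightarrow> w \<in> L \<Longrightarrow> (L - {w}) \<union> {w @ [i] | i. i < n} \<in> ntree n"

text \<open>A tree pair (T+, sigma, T-): leaves of source tree, bijection of leaves, leaves of target tree.\<close>

type_synonym tpair = "nat list set \<times> (nat list \<Rightarrow> nat list) \<times> nat list set"

definition tree_pair :: "nat \<Rightarrow> tpair \<Rightarrow> bool" where
  "tree_pair n P = (case P of (Tp, \<sigma>, Tm) \<Rightarrow>
     Tp \<in> ntree n \<and> Tm \<in> ntree n \<and> bij_betw \<sigma> Tp Tm)"

definition F_pair :: "nat \<Rightarrow> tpair \<Rightarrow> bool" where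
  "F_pair n P = (tree_pair n P \<and> (case P of (Tp, \<sigma>, Tm) \<Rightarrow>
     (\<forall>a\<in>Tp. \<forall>b\<in>Tp. wleft n a < wleft n b \<longrightarrow> wleft n (\<sigma> a) < wleft n (\<sigma> b))))"

definition cyc_ord :: "real \<Rightarrow> real \<Rightarrow> real \<Rightarrow> bool" where
  "cyc_ord x y z \<longleftrightarrow> (x < y \<and> y < z) \<or> (y < z \<and> z < x) \<or> (z < x \<and> x < y)"

definition T_pair :: "nat \<Rightarrow> tpair \<Rightarrow> bool" where
  "T_pair n P = (tree_pair n P \<and> (case P of (Tp, \<sigma>, Tm) \<Rightarrow>
     (\<forall>a\<in>Tp. \<forall>b\<in>Tp. \<forall>c\<in>Tp. cyc_ord (wleft n a) (wleft n b) (wleft n c)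
        \<longrightarrow> cyc_ord (wleft n (\<sigma> a)) (wleft n (\<sigma> b)) (wleft n (\<sigma> c)))))"

text \<open>The map of [0,1] determined by a tree pair: the interval of leaf w is mapped
  affinely onto the interval of sigma w; points outside [0,1) are fixed.\<close>

definition tp_map :: "nat \<Rightarrow> tpair \<Rightarrow> real \<Rightarrow> real" where
  "tp_map n P x = (case P of (Tp, \<sigma>, Tm) \<Rightarrow>
     (if (\<exists>w\<in>Tp. in_word n w x)
      then (let w = (THE w. w \<in> Tp \<and> in_word n w x)
            in wleft n (\<sigma> w) + (x - wleft n w) * (wlen n (\<sigma> w) / wlen n w))
      else x))"

definition Fn :: "nat \<Rightarrow> (real \<Rightarrow> real) set" where
  "Fn n = {tp_map n P | P. F_pair n P}"

definition Tn :: "nat \<Rightarrow> (real \<Rightarrow> real) set" where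
  "Tn n = {tp_map n P | P. T_pair n P}"

definition Vn :: "nat \<Rightarrow> (real \<Rightarrow> real) set" where
  "Vn n = {tp_map n P | P. tree_pair n P}"

definition represents :: "nat \<Rightarrow> tpair \<Rightarrow> (real \<Rightarrow> real) \<Rightarrow> bool" where
  "represents n P g \<longleftrightarrow> tree_pair n P \<and> tp_map n P = g"

definition reduced :: "nat \<Rightarrow> tpair \<Rightarrow> bool" where
  "reduced n P = (case P of (Tp, \<sigma>, Tm) \<Rightarrow>
     \<not> (\<exists>w w'. \<forall>i<n. w @ [i] \<in> Tp \<and> \<sigma> (w @ [i]) = w' @ [i]))"

text \<open>N(g): number of leaves of the (unique) reduced tree pair of g.\<close>

definition nleaves :: "nat \<Rightarrow> (real \<Rightarrow> real) \<Rightarrow> nat" where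
  "nleaves n g = (THE k. \<exists>P. represents n P g \<and> reduced n P \<and> card (fst P) = k)"

text \<open>(h)_[v]: from (T, id, T) with v a leaf, attach H+ at v in the source and H- at v in the target.\<close>

definition attach :: "nat list set \<Rightarrow> nat list \<Rightarrow> tpair \<Rightarrow> tpair" where
  "attach T v H = (case H of (Hp, \<tau>, Hm) \<Rightarrow>
     ((T - {v}) \<union> (\<lambda>w. v @ w) ` Hp,
      (\<lambda>x. if x \<in> (\<lambda>w. v @ w) ` Hp then v @ \<tau> (drop (length v) x) else x),
      (T - {v}) \<union> (\<lambda>w. v @ w) ` Hm))"

end

theory Submission
  imports Defs "HOL-Library.Sublist"
begin


lemma wleft_Nil[simp]: "wleft n [] = 0" by (simp add: wleft_def)
lemma wlen_Nil[simp]: "wlen n [] = 1" by (simp add: wlen_def)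

lemma wleft_Cons:
  assumes "n > 0"
  shows "wleft n (i # b) = (real i + wleft n b) / real n"
proof -
  have "wleft n (i # b) = (\<Sum>k<Suc (length b). real ((i#b) ! k) / real n ^ (k + 1))"
    by (simp add: wleft_def)
  also have "\<dots> = real i / real n + (\<Sum>k<length b. real (b ! k) / real n ^ (k + 2))"
    by (subst sum.lessThan_Suc_shift) simp
  also have "(\<Sum>k<length b. real (b ! k) / real n ^ (k + 2)) = wleft n b / real n"
    unfolding wleft_def sum_divide_distrib by (intro sum.cong) (auto simp: field_simps)
  finally show ?thesis by (simp add: add_divide_distrib)
qed

lemma wlen_Cons: "wlen n (i # b) = wlen n b / real n"
  by (simp add: wlen_def)

lemma wleft_append:
  assumes "n > 0"
  shows "wleft n (a @ b) = wleft n a + wleft n b / real n ^ length a"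
  using assms by (induction a) (auto simp: wleft_Cons field_simps)

lemma wlen_append: "wlen n (a @ b) = wlen n a * wlen n b"
  by (simp add: wlen_def power_add)

lemma wlen_pos: "n > 0 \<Longrightarrow> wlen n a > 0"
  by (simp add: wlen_def)

lemma in_word_append:
  assumes "n > 0"
  shows "in_word n (a @ b) x \<longleftrightarrow> in_word n b ((x - wleft n a) * real n ^ length a)"
proof -
  have p: "real n ^ length a > 0" using assms by simp
  show ?thesis
    unfolding in_word_def wleft_append[OF assms] wlen_append
    using p by (auto simp: wlen_def field_simps)
qed

lemma in_word_Nil: "in_word n [] y \<longleftrightarrow> 0 \<le> y \<and> y < 1"
  by (simp add: in_word_def)

lemma in_word_Cons:
  assumes "n > 0"
  shows "in_word n (i # a) x \<longleftrightarrow> in_word n a (real n * x - real i)"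
  using in_word_append[OF assms, of "[i]" a x] assms
  by (simp add: wleft_Cons algebra_simps)

lemma wbound:
  assumes "n > 0" "set b \<subseteq> {..<n}"
  shows "0 \<le> wleft n b \<and> wleft n b + wlen n b \<le> 1"
  using assms(2)
proof (induction b)
  case Nil then show ?case by simp
next
  case (Cons i b)
  then have i: "i < n" "0 \<le> wleft n b" "wleft n b + wlen n b \<le> 1" by auto
  have "real i + 1 \<le> real n" using i(1) by simp
  then have "real i + wleft n b + wlen n b \<le> real n" using i by linarith
  then show ?case using assms(1) i
    by (simp add: wleft_Cons wlen_Cons add_divide_distrib[symmetric] divide_le_eq)
qed

lemma in_word_unit:
  assumes "n > 0" "set b \<subseteq> {..<n}" "in_word n b y"
  shows "0 \<le> y \<and> y < 1"
  using wbound[OF assms(1,2)] assms(3) unfolding in_word_def by linarith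

lemma in_word_prefix:
  assumes "n > 0" "set b \<subseteq> {..<n}" "in_word n (a @ b) x"
  shows "in_word n a x"
proof -
  have "in_word n [] ((x - wleft n a) * real n ^ length a)"
    using in_word_unit[OF assms(1,2)] assms(3) in_word_append[OF assms(1)] in_word_Nil by blast
  then show ?thesis using in_word_append[OF assms(1), of a "[]"] by simp
qed

lemma in_word_comparable:
  assumes "n > 0" "set a \<subseteq> {..<n}" "set b \<subseteq> {..<n}" "in_word n a x" "in_word n b x"
  shows "prefix a b \<or> prefix b a"
  using assms(2-5)
proof (induction a arbitrary: b x)
  case Nil then show ?case by simp
next
  case (Cons i a)
  show ?case
  proof (cases b)
    case Nil then show ?thesis by simp
  next
    case (Cons j b')
    have ia: "in_word n a (real n * x - real i)" using Cons.prems(3) in_word_Cons[OF assms(1)] by simp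
    have jb: "in_word n b' (real n * x - real j)" using Cons.prems(4) \<open>b = j # b'\<close> in_word_Cons[OF assms(1)] by simp
    have "0 \<le> real n * x - real i \<and> real n * x - real i < 1"
      using in_word_unit[OF assms(1) _ ia] Cons.prems(1) by auto
    moreover have "0 \<le> real n * x - real j \<and> real n * x - real j < 1"
      using in_word_unit[OF assms(1) _ jb] Cons.prems(2) \<open>b = j # b'\<close> by auto
    ultimately have "i = j" by linarith
    then have "prefix a b' \<or> prefix b' a"
      using Cons.IH[of b' "real n * x - real i"] Cons.prems ia jb \<open>b = j # b'\<close> by auto
    then show ?thesis using \<open>b = j # b'\<close> \<open>i = j\<close> by auto
  qed
qed

lemma in_word_self: "n > 0 \<Longrightarrow> in_word n a (wleft n a)"
  by (simp add: in_word_def wlen_pos)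

lemma word_eq:
  assumes "n > 0" "set a \<subseteq> {..<n}" "set b \<subseteq> {..<n}" "in_word n a x" "in_word n b x"
    "length a = length b"
  shows "a = b"
  using in_word_comparable[OF assms(1-5)] assms(6) by (auto simp: prefix_def)



lemma tree_digits_all: "L \<in> ntree n \<Longrightarrow> \<forall>w\<in>L. set w \<subseteq> {..<n}"
  by (induction L rule: ntree.induct) fastforce+

lemma tree_digits: "L \<in> ntree n \<Longrightarrow> w \<in> L \<Longrightarrow> set w \<subseteq> {..<n}"
  using tree_digits_all by blast

lemma tree_finite: "L \<in> ntree n \<Longrightarrow> finite L"
proof (induction L rule: ntree.induct)
  case root then show ?case by simp
next
  case (expand L w)
  have "{w @ [i] | i. i < n} = (\<lambda>i. w @ [i]) ` {..<n}" by auto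
  then show ?case using expand by simp
qed

lemma tree_nonempty: "L \<in> ntree n \<Longrightarrow> n > 0 \<Longrightarrow> L \<noteq> {}"
  by (induction L rule: ntree.induct) auto

lemma tree_pf: "L \<in> ntree n \<Longrightarrow> a \<in> L \<Longrightarrow> b \<in> L \<Longrightarrow> prefix a b \<Longrightarrow> a = b"
proof (induction L arbitrary: a b rule: ntree.induct)
  case root then show ?case by simp
next
  case (expand L w)
  show ?case
  proof (cases "a \<in> L - {w}")
    case True
    show ?thesis
    proof (cases "b \<in> L - {w}")
      case True then show ?thesis using expand \<open>a \<in> L - {w}\<close> by auto
    next
      case False
      then obtain i where b: "b = w @ [i]" using expand.prems by auto
      then have "a = w @ [i] \<or> prefix a w" using expand.prems by simp
      then show ?thesis
      proof
        assume "prefix a w" then show ?thesis using expand.IH[of a w] expand.hyps \<open>a \<in> L - {w}\<close> by auto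
      next
        assume "a = w @ [i]"
        then have "prefix w a" by simp
        then have "w = a" using expand.IH[of w a] expand.hyps \<open>a \<in> L - {w}\<close> by auto
        then show ?thesis using \<open>a = w @ [i]\<close> by simp
      qed
    qed
  next
    case False
    then obtain i where a: "a = w @ [i]" using expand.prems by auto
    show ?thesis
    proof (cases "b \<in> L - {w}")
      case True
      have "prefix w b" using a expand.prems(3) by (metis append_prefixD)
      then have "w = b" using expand.IH[of w b] expand.hyps True by auto
      then show ?thesis using True by simp
    next
      case False
      then obtain j where "b = w @ [j]" using expand.prems by auto
      then show ?thesis using a expand.prems(3) by (auto simp: prefix_def)
    qed
  qed
qed

lemma tree_cover:
  assumes "L \<in> ntree n" "n > 0" "0 \<le> x" "x < 1"
  shows "\<exists>w\<in>L. in_word n w x"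
  using assms(1)
proof (induction L rule: ntree.induct)
  case root then show ?case using assms by (simp add: in_word_Nil)
next
  case (expand L w)
  then obtain a where a: "a \<in> L" "in_word n a x" by blast
  show ?case
  proof (cases "a = w")
    case False then show ?thesis using a by blast
  next
    case True
    define y where "y = (x - wleft n w) * real n ^ length w"
    have "in_word n [] y" using a True in_word_append[OF assms(2), of w "[]" x] by (simp add: y_def)
    then have y: "0 \<le> y" "y < 1" by (auto simp: in_word_Nil)
    define i where "i = nat \<lfloor>real n * y\<rfloor>"
    have "0 \<le> real n * y" using y by simp
    then have i1: "real i \<le> real n * y" "real n * y < real i + 1" unfolding i_def by linarith+
    have "real n * y < real n" using y assms(2) by simp
    then have "i < n" using i1 by linarith
    have "in_word n [] (real n * y - real i)" using i1 by (simp add: in_word_Nil)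
    then have "in_word n [i] y" using in_word_Cons[OF assms(2)] by simp
    then have "in_word n (w @ [i]) x" using in_word_append[OF assms(2)] y_def by simp
    then show ?thesis using \<open>i < n\<close> by blast
  qed
qed

lemma tree_unique:
  assumes "L \<in> ntree n" "n > 0" "a \<in> L" "b \<in> L" "in_word n a x" "in_word n b x"
  shows "a = b"
  using in_word_comparable[OF assms(2) tree_digits[OF assms(1,3)] tree_digits[OF assms(1,4)] assms(5,6)]
    tree_pf[OF assms(1,3,4)] tree_pf[OF assms(1,4,3)] by auto

lemma tree_comparable:
  assumes "L \<in> ntree n" "n > 0" "set p \<subseteq> {..<n}"
  shows "\<exists>b\<in>L. prefix b p \<or> prefix p b"
proof -
  have x: "in_word n p (wleft n p)" using in_word_self[OF assms(2)] .
  then have "0 \<le> wleft n p \<and> wleft n p < 1" using in_word_unit[OF assms(2,3)] by blast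
  then obtain b where "b \<in> L" "in_word n b (wleft n p)" using tree_cover[OF assms(1,2)] by blast
  then show ?thesis using in_word_comparable[OF assms(2) tree_digits[OF assms(1)] assms(3)] x by blast
qed

lemma tree_Nil: "L \<in> ntree n \<Longrightarrow> [] \<in> L \<Longrightarrow> L = {[]}"
  using tree_pf[of L n "[]"] by auto

lemma tree_single:
  assumes "L \<in> ntree n" "n \<ge> 2" "L = {q}"
  shows "q = []"
proof (cases q)
  case Nil then show ?thesis .
next
  case (Cons i q')
  define j where "j = (if i = 0 then 1 else (0::nat))"
  have "j < n" "j \<noteq> i" using assms(2) by (auto simp: j_def)
  then obtain b where "b \<in> L" "prefix b [j] \<or> prefix [j] b"
    using tree_comparable[OF assms(1), of "[j]"] assms(2) by auto
  then show ?thesis using assms(3) Cons \<open>j \<noteq> i\<close>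
    by (auto simp: prefix_def Cons_eq_append_conv)
qed

definition car :: "nat \<Rightarrow> nat list \<Rightarrow> nat list set" where
  "car n w = {w @ [i] | i. i < n}"

lemma tree_contract:
  assumes "L \<in> ntree n" "n > 0" "\<forall>i<n. w @ [i] \<in> L"
  shows "(L - car n w) \<union> {w} \<in> ntree n"
  using assms(1,3)
proof (induction L arbitrary: w rule: ntree.induct)
  case root then show ?case using assms(2) by auto
next
  case (expand L w0)
  show ?case
  proof (cases "w = w0")
    case True
    have "car n w0 \<inter> L = {}"
      using tree_pf[OF expand.hyps(1) expand.hyps(2)] by (force simp: car_def)
    then have "(L - {w0} \<union> {w0 @ [i] |i. i < n} - car n w) \<union> {w} = L"
      using True expand.hyps(2) by (auto simp: car_def)
    then show ?thesis using expand.hyps(1) by simp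
  next
    case False
    have ni: "w @ [i] \<noteq> w0 @ [j]" for i j using False by auto
    have inL: "\<forall>i<n. w @ [i] \<in> L - {w0}" using expand.prems ni by auto
    then have "(L - car n w) \<union> {w} \<in> ntree n" using expand.IH by auto
    moreover have "w0 \<in> (L - car n w) \<union> {w}" using expand.hyps(2) inL by (auto simp: car_def)
    ultimately have "((L - car n w) \<union> {w} - {w0}) \<union> {w0 @ [i] |i. i < n} \<in> ntree n"
      by (rule ntree.expand)
    moreover have "((L - car n w) \<union> {w} - {w0}) \<union> {w0 @ [i] |i. i < n}
       = (L - {w0} \<union> {w0 @ [i] |i. i < n} - car n w) \<union> {w}"
      using False ni inL by (auto simp: car_def)
    ultimately show ?thesis by simp
  qed
qed

lemma tree_graft:
  assumes "L \<in> ntree n" "u \<in> L" "H \<in> ntree n"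
  shows "(L - {u}) \<union> (\<lambda>w. u @ w) ` H \<in> ntree n"
  using assms(3)
proof (induction H rule: ntree.induct)
  case root then show ?case using assms by (simp add: insert_absorb)
next
  case (expand H w)
  have nu: "u @ w \<notin> L - {u}" using tree_pf[OF assms(1) assms(2), of "u @ w"] by auto
  have "u @ w \<in> (L - {u}) \<union> (\<lambda>w. u @ w) ` H" using expand.hyps by auto
  with expand.IH have "((L - {u}) \<union> (\<lambda>w. u @ w) ` H - {u @ w}) \<union> {(u @ w) @ [i] |i. i < n} \<in> ntree n"
    by (rule ntree.expand)
  moreover have "((L - {u}) \<union> (\<lambda>w. u @ w) ` H - {u @ w}) \<union> {(u @ w) @ [i] |i. i < n}
     = (L - {u}) \<union> (\<lambda>w. u @ w) ` (H - {w} \<union> {w @ [i] |i. i < n})"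
    using nu by auto
  ultimately show ?case by simp
qed

lemma graft_disj:
  assumes "L \<in> ntree n" "u \<in> L"
  shows "(L - {u}) \<inter> (\<lambda>w. u @ w) ` H = {}"
  using tree_pf[OF assms(1) assms(2)] by (auto, metis append_self_conv prefixI)



definition affim :: "nat \<Rightarrow> nat list \<Rightarrow> nat list \<Rightarrow> real \<Rightarrow> real" where
  "affim n w w' x = wleft n w' + (x - wleft n w) * (wlen n w' / wlen n w)"

lemma tp_map_in:
  assumes "tree_pair n (Tp, \<sigma>, Tm)" "n > 0" "w \<in> Tp" "in_word n w x"
  shows "tp_map n (Tp, \<sigma>, Tm) x = affim n w (\<sigma> w) x"
proof -
  have T: "Tp \<in> ntree n" using assms(1) by (simp add: tree_pair_def)
  have "(THE w. w \<in> Tp \<and> in_word n w x) = w"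
    using tree_unique[OF T assms(2)] assms(3,4) by (intro the_equality) auto
  then show ?thesis using assms(3,4) by (auto simp: tp_map_def affim_def Let_def)
qed

lemma tp_map_out:
  assumes "tree_pair n (Tp, \<sigma>, Tm)" "n > 0" "\<not> (0 \<le> x \<and> x < 1)"
  shows "tp_map n (Tp, \<sigma>, Tm) x = x"
proof -
  have T: "Tp \<in> ntree n" using assms(1) by (simp add: tree_pair_def)
  have "\<not> (\<exists>w\<in>Tp. in_word n w x)"
    using in_word_unit[OF assms(2) tree_digits[OF T]] assms(3) by blast
  then show ?thesis by (simp add: tp_map_def)
qed

lemma affim_in:
  assumes "n > 0" "in_word n w x"
  shows "in_word n w' (affim n w w' x)"
proof -
  have p: "wlen n w > 0" "wlen n w' > 0" using wlen_pos assms(1) by auto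
  define t where "t = (x - wleft n w) / wlen n w"
  have t: "0 \<le> t" "t < 1" using assms(2) p by (auto simp: in_word_def t_def field_simps)
  have "affim n w w' x = wleft n w' + t * wlen n w'"
    using p by (simp add: affim_def t_def field_simps)
  moreover have "t * wlen n w' < wlen n w'" using t p by simp
  moreover have "0 \<le> t * wlen n w'" using t p by simp
  ultimately show ?thesis by (simp add: in_word_def)
qed

lemma tree_pair_digits:
  assumes "tree_pair n (Tp, \<sigma>, Tm)" "w \<in> Tp"
  shows "set (\<sigma> w) \<subseteq> {..<n}" "\<sigma> w \<in> Tm"
proof -
  show "\<sigma> w \<in> Tm" using assms by (auto simp: tree_pair_def bij_betw_def)
  then show "set (\<sigma> w) \<subseteq> {..<n}" using assms tree_digits by (auto simp: tree_pair_def)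
qed

lemma wlen_inj:
  assumes "n \<ge> 2" "wlen n a = wlen n b"
  shows "length a = length b"
proof -
  have "real n ^ length a = real n ^ length b" using assms(2) assms(1) by (simp add: wlen_def)
  then show ?thesis using assms(1) by (simp add: power_inject_exp)
qed

lemma aff_leaf_eq:
  assumes "tree_pair n (Tp, \<sigma>, Tm)" "n \<ge> 2" "p @ d \<in> Tp" "set q \<subseteq> {..<n}"
    "\<forall>x. in_word n p x \<longrightarrow> tp_map n (Tp, \<sigma>, Tm) x = affim n p q x"
  shows "\<sigma> (p @ d) = q @ d"
proof -
  have n0: "n > 0" using assms(2) by simp
  have T: "Tp \<in> ntree n" using assms(1) by (simp add: tree_pair_def)
  define a where "a = p @ d"
  have ad: "set a \<subseteq> {..<n}" using tree_digits[OF T assms(3)] a_def by simp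
  then have dd: "set d \<subseteq> {..<n}" using a_def by simp
  have la: "wlen n a > 0" "wlen n p > 0" "wlen n q > 0" using wlen_pos n0 by auto
  define x1 where "x1 = wleft n a"
  define x2 where "x2 = wleft n a + wlen n a / 2"
  have i1: "in_word n a x1" using in_word_self[OF n0] x1_def by simp
  have i2: "in_word n a x2" using la by (simp add: in_word_def x2_def)
  have p1: "in_word n p x1" using in_word_prefix[OF n0 dd] i1 a_def by simp
  have p2: "in_word n p x2" using in_word_prefix[OF n0 dd] i2 a_def by simp
  have "tp_map n (Tp, \<sigma>, Tm) x1 = affim n a (\<sigma> a) x1"
    using tp_map_in[OF assms(1) n0 assms(3)] i1 a_def by simp
  moreover have "tp_map n (Tp, \<sigma>, Tm) x1 = affim n p q x1" using assms(5) p1 by simp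
  ultimately have e1: "affim n a (\<sigma> a) x1 = affim n p q x1" by simp
  have "tp_map n (Tp, \<sigma>, Tm) x2 = affim n a (\<sigma> a) x2"
    using tp_map_in[OF assms(1) n0 assms(3)] i2 a_def by simp
  moreover have "tp_map n (Tp, \<sigma>, Tm) x2 = affim n p q x2" using assms(5) p2 by simp
  ultimately have e2: "affim n a (\<sigma> a) x2 = affim n p q x2" by simp
  have wl: "wleft n a = wleft n p + wleft n d / real n ^ length p"
    using wleft_append[OF n0] a_def by simp
  have wq: "wleft n (q @ d) = wleft n q + wleft n d / real n ^ length q"
    using wleft_append[OF n0] by simp
  have pl: "wlen n p = 1 / real n ^ length p" "wlen n q = 1 / real n ^ length q"
    by (simp_all add: wlen_def)
  have r1: "wleft n (\<sigma> a) = wleft n (q @ d)"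
    using e1 unfolding affim_def x1_def wq wl pl using n0 by (simp add: field_simps)
  have "wlen n (\<sigma> a) / 2 = (wlen n a / 2) * (wlen n q / wlen n p)"
    using e2 r1 e1 la unfolding affim_def x2_def x1_def by (simp add: field_simps)
  then have "wlen n (\<sigma> a) = wlen n (q @ d)"
    using la by (simp add: a_def wlen_append field_simps)
  then have len: "length (\<sigma> a) = length (q @ d)" using wlen_inj[OF assms(2)] by blast
  have s1: "in_word n (\<sigma> a) (wleft n (\<sigma> a))" using in_word_self[OF n0] .
  have s2: "in_word n (q @ d) (wleft n (\<sigma> a))" using in_word_self[OF n0] r1 by simp
  show ?thesis using word_eq[OF n0 tree_pair_digits(1)[OF assms(1,3)] _ s1[unfolded a_def] s2[unfolded a_def]]
      len assms(4) dd a_def by simp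
qed

definition aff :: "nat \<Rightarrow> (real \<Rightarrow> real) \<Rightarrow> nat list \<Rightarrow> bool" where
  "aff n f p \<longleftrightarrow> (\<exists>q. set q \<subseteq> {..<n} \<and> (\<forall>x. in_word n p x \<longrightarrow> f x = affim n p q x))"

definition Mset :: "nat \<Rightarrow> (real \<Rightarrow> real) \<Rightarrow> nat list set" where
  "Mset n f = {p. set p \<subseteq> {..<n} \<and> aff n f p \<and> (\<forall>p'. strict_prefix p' p \<longrightarrow> \<not> aff n f p')}"

lemma leaf_aff:
  assumes "tree_pair n (Tp, \<sigma>, Tm)" "n > 0" "w \<in> Tp"
  shows "aff n (tp_map n (Tp, \<sigma>, Tm)) w"
  unfolding aff_def using tree_pair_digits[OF assms(1,3)] tp_map_in[OF assms(1,2,3)] by blast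

lemma no_aff_above:
  assumes "tree_pair n (Tp, \<sigma>, Tm)" "reduced n (Tp, \<sigma>, Tm)" "n \<ge> 2" "b \<in> Tp"
    "strict_prefix p b" "aff n (tp_map n (Tp, \<sigma>, Tm)) p"
  shows False
proof -
  have n0: "n > 0" using assms(3) by simp
  have T: "Tp \<in> ntree n" using assms(1) by (simp add: tree_pair_def)
  obtain q where q: "set q \<subseteq> {..<n}" "\<forall>x. in_word n p x \<longrightarrow> tp_map n (Tp, \<sigma>, Tm) x = affim n p q x"
    using assms(6) unfolding aff_def by blast
  obtain cb where cb: "b = p @ cb" "cb \<noteq> []" using assms(5) by (auto simp: strict_prefix_def prefix_def)
  define S where "S = {c. p @ c \<in> Tp}"
  have "S \<subseteq> drop (length p) ` Tp" unfolding S_def by force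
  then have fS: "finite S" using tree_finite[OF T] finite_surj by blast
  have cbS: "cb \<in> S" using cb assms(4) S_def by simp
  define m where "m = Max (length ` S)"
  have "m \<in> length ` S" unfolding m_def using fS cbS by (intro Max_in) auto
  then obtain c where c: "c \<in> S" "length c = m" by auto
  have cmax: "length c' \<le> length c" if "c' \<in> S" for c'
    using c(2) fS that unfolding m_def by simp
  have "c \<noteq> []" using cmax[OF cbS] cb(2) by auto
  then obtain c0 j where cj: "c = c0 @ [j]" by (metis rev_exhaust)
  have pd: "set p \<subseteq> {..<n}" using tree_digits[OF T assms(4)] cb(1) by auto
  have c0d: "set c0 \<subseteq> {..<n}" using tree_digits[OF T, of "p @ c"] c(1) S_def cj by auto
  have key: "p @ c0 @ [i] \<in> Tp \<and> \<sigma> ((p @ c0) @ [i]) = (q @ c0) @ [i]" if i: "i < n" for i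
  proof -
    have wd: "set ((p @ c0) @ [i]) \<subseteq> {..<n}" using pd c0d i by auto
    obtain b' where b': "b' \<in> Tp" "prefix b' ((p @ c0) @ [i]) \<or> prefix ((p @ c0) @ [i]) b'"
      using tree_comparable[OF T n0 wd] by blast
    have mem: "p @ c0 @ [i] \<in> Tp"
      using b'(2)
    proof
      assume h: "prefix b' ((p @ c0) @ [i])"
      show ?thesis
      proof (cases "b' = (p @ c0) @ [i]")
        case True then show ?thesis using b'(1) by simp
      next
        case False
        then have "prefix b' (p @ c0)" using h by (metis prefix_snoc)
        then have "prefix b' (p @ c)" using cj by (metis prefix_order.trans prefix_snoc append_assoc)
        then have "b' = p @ c" using tree_pf[OF T b'(1)] c(1) S_def by simp
        then show ?thesis using \<open>prefix b' (p @ c0)\<close> cj by (auto dest: prefix_length_le)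
      qed
    next
      assume h: "prefix ((p @ c0) @ [i]) b'"
      then obtain e where e: "b' = p @ c0 @ [i] @ e" by (auto simp: prefix_def)
      then have "c0 @ [i] @ e \<in> S" using b'(1) S_def by simp
      then have "e = []" using cmax cj by fastforce
      then show ?thesis using e b'(1) by simp
    qed
    moreover have "\<sigma> ((p @ c0) @ [i]) = (q @ c0) @ [i]"
      using aff_leaf_eq[OF assms(1) assms(3), of p "c0 @ [i]" q] mem q by simp
    ultimately show ?thesis by simp
  qed
  then have "\<forall>i<n. (p @ c0) @ [i] \<in> Tp \<and> \<sigma> ((p @ c0) @ [i]) = (q @ c0) @ [i]" by simp
  then show False using assms(2) unfolding reduced_def by blast
qed

lemma leaves_Mset:
  assumes "tree_pair n (Tp, \<sigma>, Tm)" "reduced n (Tp, \<sigma>, Tm)" "n \<ge> 2"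
  shows "Tp = Mset n (tp_map n (Tp, \<sigma>, Tm))"
proof
  have n0: "n > 0" using assms(3) by simp
  have T: "Tp \<in> ntree n" using assms(1) by (simp add: tree_pair_def)
  show "Tp \<subseteq> Mset n (tp_map n (Tp, \<sigma>, Tm))"
    using tree_digits[OF T] leaf_aff[OF assms(1) n0] no_aff_above[OF assms] unfolding Mset_def by blast
  show "Mset n (tp_map n (Tp, \<sigma>, Tm)) \<subseteq> Tp"
  proof
    fix p assume p: "p \<in> Mset n (tp_map n (Tp, \<sigma>, Tm))"
    then have pd: "set p \<subseteq> {..<n}" by (simp add: Mset_def)
    obtain b where b: "b \<in> Tp" "prefix b p \<or> prefix p b" using tree_comparable[OF T n0 pd] by blast
    show "p \<in> Tp"
    proof (cases "b = p")
      case True then show ?thesis using b by simp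
    next
      case False
      then have "strict_prefix b p \<or> strict_prefix p b" using b(2) by (auto simp: strict_prefix_def)
      then show ?thesis
        using p leaf_aff[OF assms(1) n0 b(1)] no_aff_above[OF assms b(1)] unfolding Mset_def by blast
    qed
  qed
qed

lemma nleaves_eq:
  assumes "represents n (Tp, \<sigma>, Tm) f" "reduced n (Tp, \<sigma>, Tm)" "n \<ge> 2"
  shows "nleaves n f = card Tp"
proof -
  have tp: "tree_pair n (Tp, \<sigma>, Tm)" and f: "tp_map n (Tp, \<sigma>, Tm) = f"
    using assms(1) by (auto simp: represents_def)
  have "Tp = Mset n f" using leaves_Mset[OF tp assms(2,3)] f by simp
  have uniq: "fst Q = Mset n f" if "represents n Q f" "reduced n Q" for Q
  proof -
    obtain A s B where Q: "Q = (A, s, B)" by (cases Q) auto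
    show ?thesis using leaves_Mset[of n A s B] that assms(3) unfolding Q represents_def by simp
  qed
  show ?thesis unfolding nleaves_def
  proof (rule the_equality)
    show "\<exists>P. represents n P f \<and> reduced n P \<and> card (fst P) = card Tp"
      using assms by (intro exI[of _ "(Tp, \<sigma>, Tm)"]) auto
  next
    fix k assume "\<exists>P. represents n P f \<and> reduced n P \<and> card (fst P) = k"
    then show "k = card Tp" using uniq \<open>Tp = Mset n f\<close> by auto
  qed
qed



lemma affim_append_same:
  assumes "n > 0"
  shows "affim n (a @ d) (b @ d) x = affim n a b x"
proof -
  have l: "wlen n a > 0" "wlen n b > 0" using wlen_pos assms by auto
  have wa: "wleft n (a @ d) = wleft n a + wleft n d * wlen n a"
    using wleft_append[OF assms] by (simp add: wlen_def)
  have wb: "wleft n (b @ d) = wleft n b + wleft n d * wlen n b"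
    using wleft_append[OF assms] by (simp add: wlen_def)
  have "wlen n d > 0" using wlen_pos assms by auto
  then show ?thesis unfolding affim_def wa wb wlen_append using l by (simp add: field_simps)
qed

lemma affim_same: "n > 0 \<Longrightarrow> affim n a a x = x"
  using wlen_pos[of n a] by (simp add: affim_def)

lemma contract_pair:
  assumes tp: "tree_pair n (Tp, \<sigma>, Tm)" and n2: "n \<ge> 2"
    and c: "\<forall>i<n. w @ [i] \<in> Tp \<and> \<sigma> (w @ [i]) = w' @ [i]"
  shows "tree_pair n (Tp - car n w \<union> {w}, \<sigma>(w := w'), Tm - car n w' \<union> {w'})
       \<and> tp_map n (Tp - car n w \<union> {w}, \<sigma>(w := w'), Tm - car n w' \<union> {w'}) = tp_map n (Tp, \<sigma>, Tm)
       \<and> card (Tp - car n w \<union> {w}) < card Tp"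
proof -
  have n0: "n > 0" using n2 by simp
  have Tp: "Tp \<in> ntree n" and Tm: "Tm \<in> ntree n" and bij: "bij_betw \<sigma> Tp Tm"
    using tp by (auto simp: tree_pair_def)
  have cm: "\<forall>i<n. w' @ [i] \<in> Tm"
  proof (intro allI impI)
    fix i assume "i < n"
    then have "w @ [i] \<in> Tp" "\<sigma> (w @ [i]) = w' @ [i]" using c by auto
    then show "w' @ [i] \<in> Tm" using bij bij_betwE by metis
  qed
  have T1: "Tp - car n w \<union> {w} \<in> ntree n" using tree_contract[OF Tp n0] c by blast
  have T2: "Tm - car n w' \<union> {w'} \<in> ntree n" using tree_contract[OF Tm n0] cm by blast
  have wn: "w \<notin> Tp" using tree_pf[OF Tp, of w "w @ [0]"] c n0 by auto
  have wn': "w' \<notin> Tm" using tree_pf[OF Tm, of w' "w' @ [0]"] cm n0 by auto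
  have csub: "car n w \<subseteq> Tp" using c by (auto simp: car_def)
  have cimg: "\<sigma> ` car n w = car n w'"
  proof
    show "\<sigma> ` car n w \<subseteq> car n w'" using c by (auto simp: car_def)
    show "car n w' \<subseteq> \<sigma> ` car n w"
    proof
      fix y assume "y \<in> car n w'"
      then obtain i where "i < n" "y = w' @ [i]" by (auto simp: car_def)
      then have "y = \<sigma> (w @ [i])" "w @ [i] \<in> car n w" using c by (auto simp: car_def)
      then show "y \<in> \<sigma> ` car n w" by blast
    qed
  qed
  have inj: "inj_on \<sigma> Tp" using bij by (simp add: bij_betw_def)
  have img: "\<sigma> ` (Tp - car n w) = Tm - car n w'"
    using inj_on_image_set_diff[OF inj _ csub] cimg bij by (simp add: bij_betw_def)
  have b1: "bij_betw \<sigma> (Tp - car n w) (Tm - car n w')"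
    using bij_betw_subset[OF bij Diff_subset img] .
  have b2: "bij_betw (\<sigma>(w := w')) (Tp - car n w) (Tm - car n w')"
  proof -
    have "bij_betw (\<sigma>(w := w')) (Tp - car n w) (Tm - car n w') = bij_betw \<sigma> (Tp - car n w) (Tm - car n w')"
      by (rule bij_betw_cong) (use wn in auto)
    then show ?thesis using b1 by simp
  qed
  have B: "bij_betw (\<sigma>(w := w')) (Tp - car n w \<union> {w}) (Tm - car n w' \<union> {w'})"
    using notIn_Un_bij_betw[of w "Tp - car n w" "\<sigma>(w := w')" "Tm - car n w'"] b2 wn wn' by simp
  have tp': "tree_pair n (Tp - car n w \<union> {w}, \<sigma>(w := w'), Tm - car n w' \<union> {w'})"
    using T1 T2 B by (simp add: tree_pair_def)
  have "tp_map n (Tp - car n w \<union> {w}, \<sigma>(w := w'), Tm - car n w' \<union> {w'}) x = tp_map n (Tp, \<sigma>, Tm) x" for x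
  proof (cases "0 \<le> x \<and> x < 1")
    case False then show ?thesis using tp_map_out[OF tp n0] tp_map_out[OF tp' n0] by simp
  next
    case True
    then obtain a where a: "a \<in> Tp - car n w \<union> {w}" "in_word n a x" using tree_cover[OF T1 n0] by blast
    show ?thesis
    proof (cases "a = w")
      case False
      then have "a \<in> Tp" using a by auto
      then show ?thesis using tp_map_in[OF tp n0 \<open>a \<in> Tp\<close> a(2)] tp_map_in[OF tp' n0 a] False by simp
    next
      case True
      obtain b where b: "b \<in> Tp" "in_word n b x" using tree_cover[OF Tp n0] \<open>0 \<le> x \<and> x < 1\<close> by blast
      have wd: "set w \<subseteq> {..<n}" using tree_digits[OF Tp, of "w @ [0]"] c n0 by auto
      have "prefix b w \<or> prefix w b"
        using in_word_comparable[OF n0 tree_digits[OF Tp b(1)] wd b(2)] a(2) True by simp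
      then have "prefix w b"
      proof
        assume "prefix b w"
        then have "prefix b (w @ [0])" by (simp add: prefix_order.trans)
        then have "b = w @ [0]" using tree_pf[OF Tp b(1)] c n0 by auto
        then show ?thesis using \<open>prefix b w\<close> by (auto dest: prefix_length_le)
      qed
      then obtain e where e: "b = w @ e" by (auto simp: prefix_def)
      then have "e \<noteq> []" using wn b(1) by auto
      then obtain i e' where "e = i # e'" by (cases e) auto
      then have "prefix (w @ [i]) b" using e by simp
      moreover have "i < n" using tree_digits[OF Tp b(1)] e \<open>e = i # e'\<close> by auto
      ultimately have bi: "b = w @ [i]" using tree_pf[OF Tp _ b(1)] c by auto
      have "tp_map n (Tp, \<sigma>, Tm) x = affim n (w @ [i]) (w' @ [i]) x"
        using tp_map_in[OF tp n0 b(1) b(2)] bi c \<open>i < n\<close> by simp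
      also have "\<dots> = affim n w w' x" by (rule affim_append_same[OF n0])
      finally show ?thesis using tp_map_in[OF tp' n0 a] True by simp
    qed
  qed
  moreover have "card (Tp - car n w \<union> {w}) < card Tp"
  proof -
    have f: "finite Tp" using tree_finite[OF Tp] .
    have "car n w = (\<lambda>i. w @ [i]) ` {..<n}" by (auto simp: car_def)
    then have cc: "card (car n w) = n" by (simp add: card_image inj_on_def)
    have "card (Tp - car n w \<union> {w}) = card (Tp - car n w) + 1"
      using wn f by simp
    also have "\<dots> = card Tp - n + 1" using card_Diff_subset[OF _ csub] f cc finite_subset[OF csub f] by simp
    finally show ?thesis using card_mono[OF f csub] cc n2 by linarith
  qed
  ultimately show ?thesis using tp' by auto
qed

lemma reduce_exists:
  assumes "tree_pair n (Tp, \<sigma>, Tm)" "n \<ge> 2"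
  shows "\<exists>A s B. tree_pair n (A, s, B) \<and> reduced n (A, s, B) \<and> tp_map n (A, s, B) = tp_map n (Tp, \<sigma>, Tm)"
  using assms(1)
proof (induction "card Tp" arbitrary: Tp \<sigma> Tm rule: less_induct)
  case less
  show ?case
  proof (cases "reduced n (Tp, \<sigma>, Tm)")
    case True then show ?thesis using less.prems by blast
  next
    case False
    then obtain w w' where "\<forall>i<n. w @ [i] \<in> Tp \<and> \<sigma> (w @ [i]) = w' @ [i]"
      unfolding reduced_def by blast
    note cp = contract_pair[OF less.prems assms(2) this]
    obtain A s B where "tree_pair n (A, s, B)" "reduced n (A, s, B)"
      "tp_map n (A, s, B) = tp_map n (Tp - car n w \<union> {w}, \<sigma>(w := w'), Tm - car n w' \<union> {w'})"
      using less.hyps[of "Tp - car n w \<union> {w}" "\<sigma>(w := w')" "Tm - car n w' \<union> {w'}"] cp by blast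
    then show ?thesis using cp by auto
  qed
qed



lemma graft_bij:
  assumes "bij_betw s A B"
  shows "bij_betw (\<lambda>x. v @ s (drop (length u) x)) ((\<lambda>w. u @ w) ` A) ((\<lambda>w. v @ w) ` B)"
proof -
  have 1: "bij_betw (drop (length u)) ((\<lambda>w. u @ w) ` A) A"
    by (auto simp: bij_betw_def inj_on_def image_image)
  have 2: "bij_betw (\<lambda>w. v @ w) B ((\<lambda>w. v @ w) ` B)" by (simp add: bij_betw_def inj_on_def)
  from bij_betw_trans[OF bij_betw_trans[OF 1 assms] 2] show ?thesis by (simp add: comp_def)
qed

lemma affim_prefix2:
  assumes "n > 0"
  shows "affim n (u @ w) (v @ w') x = wleft n v + affim n w w' ((x - wleft n u) * real n ^ length u) / real n ^ length v"
proof -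
  have p: "real n ^ length u > 0" "real n ^ length v > 0" using assms by auto
  have l: "wlen n w > 0" "wlen n w' > 0" using wlen_pos assms by auto
  have e: "wlen n (u @ w) = wlen n w / real n ^ length u" "wlen n (v @ w') = wlen n w' / real n ^ length v"
    by (simp_all add: wlen_def power_add)
  show ?thesis unfolding affim_def wleft_append[OF assms] e using p l by (simp add: field_simps)
qed

lemma attach_eq:
  "attach T v (Hp, \<tau>, Hm) = ((T - {v}) \<union> (\<lambda>w. v @ w) ` Hp,
      (\<lambda>x. if x \<in> (\<lambda>w. v @ w) ` Hp then v @ \<tau> (drop (length v) x) else x),
      (T - {v}) \<union> (\<lambda>w. v @ w) ` Hm)"
  by (simp add: attach_def)

lemma attach_pair:
  assumes "tree_pair n (Hp, \<tau>, Hm)" "T \<in> ntree n" "v \<in> T"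
  shows "tree_pair n (attach T v (Hp, \<tau>, Hm))"
proof -
  have H: "Hp \<in> ntree n" "Hm \<in> ntree n" "bij_betw \<tau> Hp Hm" using assms(1) by (auto simp: tree_pair_def)
  let ?s = "\<lambda>x. if x \<in> (\<lambda>w. v @ w) ` Hp then v @ \<tau> (drop (length v) x) else x"
  have b1: "bij_betw ?s (T - {v}) (T - {v})"
  proof -
    have "bij_betw ?s (T - {v}) (T - {v}) = bij_betw id (T - {v}) (T - {v})"
      by (rule bij_betw_cong) (use graft_disj[OF assms(2,3), of Hp] in auto)
    then show ?thesis by simp
  qed
  have b2: "bij_betw ?s ((\<lambda>w. v @ w) ` Hp) ((\<lambda>w. v @ w) ` Hm)"
  proof -
    have "bij_betw ?s ((\<lambda>w. v @ w) ` Hp) ((\<lambda>w. v @ w) ` Hm)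
        = bij_betw (\<lambda>x. v @ \<tau> (drop (length v) x)) ((\<lambda>w. v @ w) ` Hp) ((\<lambda>w. v @ w) ` Hm)"
      by (rule bij_betw_cong) auto
    then show ?thesis using graft_bij[OF H(3)] by simp
  qed
  have "bij_betw ?s ((T - {v}) \<union> (\<lambda>w. v @ w) ` Hp) ((T - {v}) \<union> (\<lambda>w. v @ w) ` Hm)"
    by (rule bij_betw_combine[OF b1 b2 graft_disj[OF assms(2,3)]])
  then show ?thesis unfolding attach_eq tree_pair_def
    using tree_graft[OF assms(2,3) H(1)] tree_graft[OF assms(2,3) H(2)] by simp
qed

lemma attach_map:
  assumes "tree_pair n (Hp, \<tau>, Hm)" "T \<in> ntree n" "v \<in> T" "n > 0"
  shows "tp_map n (attach T v (Hp, \<tau>, Hm)) x =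
    (if in_word n v x then wleft n v + tp_map n (Hp, \<tau>, Hm) ((x - wleft n v) * real n ^ length v) / real n ^ length v
     else x)"
proof -
  have H: "Hp \<in> ntree n" "Hm \<in> ntree n" "bij_betw \<tau> Hp Hm" using assms(1) by (auto simp: tree_pair_def)
  note AP = attach_pair[OF assms(1-3), unfolded attach_eq]
  show ?thesis
  proof (cases "in_word n v x")
    case True
    define y where "y = (x - wleft n v) * real n ^ length v"
    have "in_word n [] y" using True in_word_append[OF assms(4), of v "[]"] y_def by simp
    then have "0 \<le> y \<and> y < 1" by (simp add: in_word_Nil)
    then obtain w where w: "w \<in> Hp" "in_word n w y" using tree_cover[OF H(1) assms(4)] by blast
    have vw: "in_word n (v @ w) x" using in_word_append[OF assms(4)] w(2) y_def by simp
    have "tp_map n (attach T v (Hp, \<tau>, Hm)) x = affim n (v @ w) (v @ \<tau> w) x"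
      unfolding attach_eq using tp_map_in[OF AP assms(4), of "v @ w" x] vw w(1) by simp
    also have "\<dots> = wleft n v + affim n w (\<tau> w) y / real n ^ length v"
      using affim_prefix2[OF assms(4)] y_def by simp
    also have "affim n w (\<tau> w) y = tp_map n (Hp, \<tau>, Hm) y"
      using tp_map_in[OF assms(1,4) w] by simp
    finally show ?thesis using True y_def by simp
  next
    case False
    show ?thesis
    proof (cases "0 \<le> x \<and> x < 1")
      case False
      then show ?thesis using tp_map_out[OF AP assms(4)] \<open>\<not> in_word n v x\<close> unfolding attach_eq by simp
    next
      case True
      obtain a where a: "a \<in> (T - {v}) \<union> (\<lambda>w. v @ w) ` Hp" "in_word n a x"
        using tree_cover[OF tree_graft[OF assms(2,3) H(1)] assms(4) ] True by blast
      have "a \<notin> (\<lambda>w. v @ w) ` Hp"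
      proof
        assume "a \<in> (\<lambda>w. v @ w) ` Hp"
        then obtain w where "w \<in> Hp" "a = v @ w" by auto
        then show False using in_word_prefix[OF assms(4) tree_digits[OF H(1)]] a(2) \<open>\<not> in_word n v x\<close> by blast
      qed
      then have "tp_map n (attach T v (Hp, \<tau>, Hm)) x = affim n a a x"
        unfolding attach_eq using tp_map_in[OF AP assms(4) a] by simp
      then show ?thesis using affim_same[OF assms(4)] \<open>\<not> in_word n v x\<close> by simp
    qed
  qed
qed



lemma comp_tree_pair:
  assumes G: "tree_pair n (Gp, \<sigma>, Gm)" and u: "u \<in> Gp" and A: "tree_pair n (Ar, sr, Br)"
  shows "tree_pair n (Gp - {u} \<union> (\<lambda>w. u @ w) ` Ar,
     (\<lambda>x. if x \<in> (\<lambda>w. u @ w) ` Ar then \<sigma> u @ sr (drop (length u) x) else \<sigma> x),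
     Gm - {\<sigma> u} \<union> (\<lambda>w. \<sigma> u @ w) ` Br)"
proof -
  have Gt: "Gp \<in> ntree n" "Gm \<in> ntree n" "bij_betw \<sigma> Gp Gm" using G by (auto simp: tree_pair_def)
  have At: "Ar \<in> ntree n" "Br \<in> ntree n" "bij_betw sr Ar Br" using A by (auto simp: tree_pair_def)
  have vG: "\<sigma> u \<in> Gm" using Gt(3) u by (meson bij_betwE)
  let ?s = "\<lambda>x. if x \<in> (\<lambda>w. u @ w) ` Ar then \<sigma> u @ sr (drop (length u) x) else \<sigma> x"
  have img: "\<sigma> ` (Gp - {u}) = Gm - {\<sigma> u}"
    using Gt(3) u inj_on_image_set_diff[of \<sigma> Gp Gp "{u}"] by (simp add: bij_betw_def)
  have b1: "bij_betw ?s (Gp - {u}) (Gm - {\<sigma> u})"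
  proof -
    have "bij_betw ?s (Gp - {u}) (Gm - {\<sigma> u}) = bij_betw \<sigma> (Gp - {u}) (Gm - {\<sigma> u})"
      by (rule bij_betw_cong) (use graft_disj[OF Gt(1) u, of Ar] in auto)
    then show ?thesis using bij_betw_subset[OF Gt(3) Diff_subset img] by simp
  qed
  have b2: "bij_betw ?s ((\<lambda>w. u @ w) ` Ar) ((\<lambda>w. \<sigma> u @ w) ` Br)"
  proof -
    have "bij_betw ?s ((\<lambda>w. u @ w) ` Ar) ((\<lambda>w. \<sigma> u @ w) ` Br)
        = bij_betw (\<lambda>x. \<sigma> u @ sr (drop (length u) x)) ((\<lambda>w. u @ w) ` Ar) ((\<lambda>w. \<sigma> u @ w) ` Br)"
      by (rule bij_betw_cong) auto
    then show ?thesis using graft_bij[OF At(3)] by simp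
  qed
  have "bij_betw ?s (Gp - {u} \<union> (\<lambda>w. u @ w) ` Ar) (Gm - {\<sigma> u} \<union> (\<lambda>w. \<sigma> u @ w) ` Br)"
    by (rule bij_betw_combine[OF b1 b2 graft_disj[OF Gt(2) vG]])
  then show ?thesis unfolding tree_pair_def
    using tree_graft[OF Gt(1) u At(1)] tree_graft[OF Gt(2) vG At(2)] by simp
qed

lemma comp_reduced:
  assumes n2: "n \<ge> 2" and G: "tree_pair n (Gp, \<sigma>, Gm)" and Gr: "reduced n (Gp, \<sigma>, Gm)"
    and u: "u \<in> Gp" and A: "tree_pair n (Ar, sr, Br)" and Ar: "reduced n (Ar, sr, Br)"
  shows "reduced n (Gp - {u} \<union> (\<lambda>w. u @ w) ` Ar,
     (\<lambda>x. if x \<in> (\<lambda>w. u @ w) ` Ar then \<sigma> u @ sr (drop (length u) x) else \<sigma> x),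
     Gm - {\<sigma> u} \<union> (\<lambda>w. \<sigma> u @ w) ` Br)"
proof -
  have Gt: "Gp \<in> ntree n" "Gm \<in> ntree n" "bij_betw \<sigma> Gp Gm" using G by (auto simp: tree_pair_def)
  have At: "Ar \<in> ntree n" "Br \<in> ntree n" "bij_betw sr Ar Br" using A by (auto simp: tree_pair_def)
  let ?s = "\<lambda>x. if x \<in> (\<lambda>w. u @ w) ` Ar then \<sigma> u @ sr (drop (length u) x) else \<sigma> x"
  define v where "v = \<sigma> u"
  have single: "sr [] = []" if "[] \<in> Ar"
  proof -
    have "Ar = {[]}" using tree_Nil[OF At(1) that] .
    then have "Br = {sr []}" using At(3) by (auto simp: bij_betw_def)
    then show ?thesis using tree_single[OF At(2) n2] by simp
  qed
  show ?thesis unfolding reduced_def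
  proof (clarify)
    fix w w'
    assume H: "\<forall>i<n. w @ [i] \<in> Gp - {u} \<union> (\<lambda>w. u @ w) ` Ar \<and> ?s (w @ [i]) = w' @ [i]"
    show False
    proof (cases "prefix u w")
      case True
      then obtain d where d: "w = u @ d" by (auto simp: prefix_def)
      have inA: "d @ [i] \<in> Ar \<and> \<sigma> u @ sr (d @ [i]) = w' @ [i]" if "i < n" for i
      proof -
        have m: "u @ d @ [i] \<in> Gp - {u} \<union> (\<lambda>w. u @ w) ` Ar" and e: "?s (u @ d @ [i]) = w' @ [i]"
          using H that d by auto
        have "u @ d @ [i] \<notin> Gp - {u}"
          using tree_pf[OF Gt(1) u, of "u @ d @ [i]"] by auto
        then have "u @ d @ [i] \<in> (\<lambda>w. u @ w) ` Ar" using m by blast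
        then have "d @ [i] \<in> Ar" by auto
        then show ?thesis using e by auto
      qed
      show False
      proof (cases "length v \<le> length w'")
        case True
        have "sr (d @ [i]) = drop (length v) w' @ [i]" if "i < n" for i
        proof -
          have "drop (length v) (v @ sr (d @ [i])) = drop (length v) (w' @ [i])"
            using inA[OF that] v_def by simp
          then show ?thesis using True by simp
        qed
        then show False using Ar inA unfolding reduced_def by blast
      next
        case False
        have "length (v @ sr (d @ [0])) = length (w' @ [0])" using inA[of 0] n2 v_def by simp
        then have "length v + length (sr (d @ [0])) = length w' + 1" by simp
        then have "length (sr (d @ [0])) = 0" using False by linarith
        then have "sr (d @ [0]) = []" by simp
        moreover have "sr (d @ [1]) \<in> Br" "sr (d @ [0]) \<in> Br" "d @ [1] \<in> Ar" "d @ [0] \<in> Ar"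
          using inA[of 0] inA[of 1] n2 At(3) by (auto dest: bij_betwE)
        ultimately have "Br = {[]}" using tree_Nil[OF At(2)] by simp
        then have "sr (d @ [1]) = sr (d @ [0])" using \<open>sr (d @ [1]) \<in> Br\<close> \<open>sr (d @ [0]) \<in> Br\<close> by simp
        then show False using At(3) \<open>d @ [1] \<in> Ar\<close> \<open>d @ [0] \<in> Ar\<close>
          by (auto simp: bij_betw_def inj_on_def)
      qed
    next
      case False
      have "w @ [i] \<in> Gp \<and> \<sigma> (w @ [i]) = w' @ [i]" if "i < n" for i
      proof (cases "w @ [i] \<in> (\<lambda>w. u @ w) ` Ar")
        case True
        then obtain e where e: "e \<in> Ar" "w @ [i] = u @ e" by auto
        have "e = []"
        proof (rule ccontr)
          assume "e \<noteq> []"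
          then obtain e0 j where "e = e0 @ [j]" by (metis rev_exhaust)
          then have "w = u @ e0" using e(2) by simp
          then show False using False by simp
        qed
        then have "w @ [i] = u" "[] \<in> Ar" using e by auto
        moreover have "?s (w @ [i]) = w' @ [i]" using H that by blast
        ultimately show ?thesis using single True u by simp
      next
        case False
        then show ?thesis using H that by auto
      qed
      then show False using Gr unfolding reduced_def by blast
    qed
  qed
qed



lemma comp_map:
  assumes n2: "n \<ge> 2" and G: "tree_pair n (Gp, \<sigma>, Gm)" and u: "u \<in> Gp"
    and A: "tree_pair n (Ar, sr, Br)" and H: "tree_pair n (Hp, \<tau>, Hm)"
    and AH: "tp_map n (Ar, sr, Br) = tp_map n (Hp, \<tau>, Hm)"
    and T: "T \<in> ntree n" "\<sigma> u \<in> T"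
  shows "tp_map n (Gp - {u} \<union> (\<lambda>w. u @ w) ` Ar,
     (\<lambda>x. if x \<in> (\<lambda>w. u @ w) ` Ar then \<sigma> u @ sr (drop (length u) x) else \<sigma> x),
     Gm - {\<sigma> u} \<union> (\<lambda>w. \<sigma> u @ w) ` Br) = tp_map n (attach T (\<sigma> u) (Hp, \<tau>, Hm)) \<circ> tp_map n (Gp, \<sigma>, Gm)"
    (is "tp_map n ?P = _")
proof
  fix x
  have n0: "n > 0" using n2 by simp
  have Gt: "Gp \<in> ntree n" "Gm \<in> ntree n" "bij_betw \<sigma> Gp Gm" using G by (auto simp: tree_pair_def)
  have At: "Ar \<in> ntree n" "Br \<in> ntree n" "bij_betw sr Ar Br" using A by (auto simp: tree_pair_def)
  define v where "v = \<sigma> u"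
  have vG: "v \<in> Gm" using Gt(3) u v_def by (meson bij_betwE)
  have vd: "set v \<subseteq> {..<n}" using tree_digits[OF Gt(2) vG] .
  note P = comp_tree_pair[OF G u A]
  note hm = attach_map[OF H T n0]
  show "tp_map n ?P x = (tp_map n (attach T (\<sigma> u) (Hp, \<tau>, Hm)) \<circ> tp_map n (Gp, \<sigma>, Gm)) x"
  proof (cases "0 \<le> x \<and> x < 1")
    case False
    have "\<not> in_word n v x" using in_word_unit[OF n0 vd] False by blast
    then show ?thesis using tp_map_out[OF P n0 False] tp_map_out[OF G n0 False] hm v_def by simp
  next
    case True
    obtain a where a: "a \<in> Gp - {u} \<union> (\<lambda>w. u @ w) ` Ar" "in_word n a x"
      using tree_cover[OF tree_graft[OF Gt(1) u At(1)] n0] True by blast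
    show ?thesis
    proof (cases "a \<in> (\<lambda>w. u @ w) ` Ar")
      case True
      then obtain w where w: "w \<in> Ar" "a = u @ w" by auto
      have ux: "in_word n u x" using in_word_prefix[OF n0 tree_digits[OF At(1) w(1)]] a(2) w(2) by simp
      define y where "y = (x - wleft n u) * real n ^ length u"
      have wy: "in_word n w y" using a(2) w(2) in_word_append[OF n0] y_def by simp
      have gx: "tp_map n (Gp, \<sigma>, Gm) x = affim n u v x" using tp_map_in[OF G n0 u ux] v_def by simp
      have vgx: "in_word n v (affim n u v x)" using affim_in[OF n0 ux] .
      have yy: "(affim n u v x - wleft n v) * real n ^ length v = y"
        unfolding affim_def y_def wlen_def using n0 by (simp add: field_simps)
      have "tp_map n ?P x = affim n (u @ w) (v @ sr w) x"
        using tp_map_in[OF P n0 a(1) a(2)] True w v_def by simp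
      also have "\<dots> = wleft n v + affim n w (sr w) y / real n ^ length v"
        using affim_prefix2[OF n0] y_def by simp
      also have "affim n w (sr w) y = tp_map n (Hp, \<tau>, Hm) y"
        using tp_map_in[OF A n0 w(1) wy] AH by simp
      finally show ?thesis using hm[of "affim n u v x"] gx vgx yy v_def by simp
    next
      case False
      then have aG: "a \<in> Gp" "a \<noteq> u" using a(1) by auto
      have gx: "tp_map n (Gp, \<sigma>, Gm) x = affim n a (\<sigma> a) x" using tp_map_in[OF G n0 aG(1) a(2)] .
      have sa: "in_word n (\<sigma> a) (affim n a (\<sigma> a) x)" using affim_in[OF n0 a(2)] .
      have "\<not> in_word n v (affim n a (\<sigma> a) x)"
      proof
        assume "in_word n v (affim n a (\<sigma> a) x)"
        then have "\<sigma> a = v" using tree_unique[OF Gt(2) n0 _ vG sa] tree_pair_digits(2)[OF G aG(1)] by blast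
        then show False using aG Gt(3) u v_def by (auto simp: bij_betw_def inj_on_def)
      qed
      moreover have "tp_map n ?P x = affim n a (\<sigma> a) x"
        using tp_map_in[OF P n0 a(1) a(2)] False by simp
      ultimately show ?thesis using hm gx v_def by simp
    qed
  qed
qed

theorem lemma3p8:
  fixes n :: nat and G :: "(real \<Rightarrow> real) set" and g h :: "real \<Rightarrow> real"
    and Gp Gm T Hp Hm :: "nat list set" and \<sigma> \<tau> :: "nat list \<Rightarrow> nat list" and u v :: "nat list"
  assumes "n \<ge> 2"
    and "G \<in> {Fn n, Tn n, Vn n}"
    and "g \<in> G"
    and "represents n (Gp, \<sigma>, Gm) g" and "reduced n (Gp, \<sigma>, Gm)"
    and "u \<in> Gp" and "v = \<sigma> u"
    and "h \<in> Fn n"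
    and "F_pair n (Hp, \<tau>, Hm)" and "tp_map n (Hp, \<tau>, Hm) = h"
    and "T \<in> ntree n" and "v \<in> T"
  shows "nleaves n (tp_map n (attach T v (Hp, \<tau>, Hm)) \<circ> g) = nleaves n g + nleaves n h - 1"
proof -
  have n2: "n \<ge> 2" by fact
  have G: "tree_pair n (Gp, \<sigma>, Gm)" and g: "tp_map n (Gp, \<sigma>, Gm) = g"
    using assms(4) by (auto simp: represents_def)
  have H: "tree_pair n (Hp, \<tau>, Hm)" using assms(9) by (simp add: F_pair_def)
  obtain Ar sr Br where A: "tree_pair n (Ar, sr, Br)" "reduced n (Ar, sr, Br)"
    "tp_map n (Ar, sr, Br) = tp_map n (Hp, \<tau>, Hm)"
    using reduce_exists[OF H n2] by blast
  have Tv: "\<sigma> u \<in> T" using assms(7,12) by simp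
  let ?P = "(Gp - {u} \<union> (\<lambda>w. u @ w) ` Ar,
     (\<lambda>x. if x \<in> (\<lambda>w. u @ w) ` Ar then \<sigma> u @ sr (drop (length u) x) else \<sigma> x),
     Gm - {\<sigma> u} \<union> (\<lambda>w. \<sigma> u @ w) ` Br)"
  have rep: "represents n ?P (tp_map n (attach T v (Hp, \<tau>, Hm)) \<circ> g)"
    unfolding represents_def
    using comp_tree_pair[OF G assms(6) A(1)] comp_map[OF n2 G assms(6) A(1) H A(3) assms(11) Tv] g assms(7)
    by simp
  have red: "reduced n ?P" using comp_reduced[OF n2 G assms(5) assms(6) A(1) A(2)] .
  have e1: "nleaves n (tp_map n (attach T v (Hp, \<tau>, Hm)) \<circ> g) = card (Gp - {u} \<union> (\<lambda>w. u @ w) ` Ar)"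
    using nleaves_eq[OF rep red n2] .
  have e2: "nleaves n g = card Gp" using nleaves_eq[OF assms(4,5) n2] .
  have e3: "nleaves n h = card Ar"
    using nleaves_eq[OF _ A(2) n2] A(1) A(3) assms(10) by (simp add: represents_def)
  have Gt: "Gp \<in> ntree n" using G by (simp add: tree_pair_def)
  have At: "Ar \<in> ntree n" using A by (simp add: tree_pair_def)
  have fG: "finite Gp" using tree_finite[OF Gt] .
  have fA: "finite Ar" using tree_finite[OF At] .
  have "card (Gp - {u} \<union> (\<lambda>w. u @ w) ` Ar) = card (Gp - {u}) + card ((\<lambda>w. u @ w) ` Ar)"
    using card_Un_disjoint[OF _ _ graft_disj[OF Gt assms(6)]] fG fA by simp
  also have "card ((\<lambda>w. u @ w) ` Ar) = card Ar" by (simp add: card_image inj_on_def)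
  also have "card (Gp - {u}) = card Gp - 1" using assms(6) fG by simp
  finally have "card (Gp - {u} \<union> (\<lambda>w. u @ w) ` Ar) = card Gp - 1 + card Ar" .
  moreover have "card Gp \<ge> 1" using assms(6) fG card_0_eq[OF fG] by fastforce
  ultimately show ?thesis using e1 e2 e3 by simp
qed


end
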